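(* Let $a\ge2$ be an integer, $m\ge1$, $n\ge1$, and let $\mathcal{A}_n$ be the arrangement in $\mathbb{R}^n$ with hyperplanes $x_i=0$ for all $1\le i\le n$, $x_i=x_j$ for all $1\le i<j\le n$, and $x_i=a^rx_j$ for all $1\le i\neq j\le n$ and $1\le r\le m$. Then $$\chi_{\mathcal{A}_n}(t)=(t-1)\prod_{j=1}^{n-1}(t-1-mn-j).$$
   Context: For a finite arrangement $\mathcal{A}$ of affine hyperplanes in $\mathbb{R}^n$, the characteristic polynomial is $\chi_{\mathcal{A}}(t)=\sum_{\mathcal{B}}(-1)^{\#\mathcal{B}}t^{n-\operatorname{rank}(\mathcal{B})}$, the sum over subsets $\mathcal{B}\subseteq\mathcal{A}$ whose hyperplanes have nonempty common intersection, where $\operatorname{rank}(\mathcal{B})$ is the dimension of the span of the normal vectors of the hyperplanes in $\mathcal{B}$. *)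

theory Defs
  imports "HOL-Analysis.Analysis" "HOL-Computational_Algebra.Polynomial"
begin

text \<open>Affine hyperplane in R^n (coordinates indexed by the finite type 'n, n = CARD('n)).\<close>
definition hyperplane :: "real^'n \<Rightarrow> real \<Rightarrow> (real^'n) set" where
  "hyperplane c d = {x. c \<bullet> x = d}"

definition normals :: "(real^'n) set \<Rightarrow> (real^'n) set" where
  "normals H = {c. c \<noteq> 0 \<and> (\<exists>d. H = hyperplane c d)}"

definition arr_rank :: "(real^'n) set set \<Rightarrow> nat" where
  "arr_rank B = dim (span (\<Union>H\<in>B. normals H))"

definition char_poly :: "(real^'n) set set \<Rightarrow> real poly" where
  "char_poly A = (\<Sum>B\<in>{B. B \<subseteq> A \<and> \<Inter>B \<noteq> {}}.
      (-1) ^ card B * monom 1 (CARD('n) - arr_rank B))"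

definition arrA :: "int \<Rightarrow> nat \<Rightarrow> (real^'n) set set" where
  "arrA a m =
     {hyperplane (axis i 1) 0 | i. True}
   \<union> {hyperplane (axis i 1 - axis j 1) 0 | i j. i \<noteq> j}
   \<union> {hyperplane (axis i 1 - (real_of_int a ^ r) *\<^sub>R axis j 1) 0 | i j r.
        i \<noteq> j \<and> 1 \<le> r \<and> r \<le> m}"

end

theory Submission
  imports Defs
begin


datatype 'n cons = Zc 'n | Ec 'n 'n nat

definition edge :: "'n cons set \<Rightarrow> 'n \<Rightarrow> 'n \<Rightarrow> int \<Rightarrow> bool" where
  "edge C u v w \<longleftrightarrow> (\<exists>r. Ec u v r \<in> C \<and> w = int r) \<or> (\<exists>r. Ec v u r \<in> C \<and> w = - int r)"

inductive reach :: "'n cons set \<Rightarrow> 'n \<Rightarrow> 'n \<Rightarrow> int \<Rightarrow> bool" for C where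
  rrefl: "reach C i i 0"
| rstep: "reach C i j k \<Longrightarrow> edge C j l w \<Longrightarrow> reach C i l (k + w)"

lemma edge_sym: "edge C u v w \<Longrightarrow> edge C v u (-w)"
  unfolding edge_def by auto

lemma reach_edge: "edge C u v w \<Longrightarrow> reach C u v w"
  using rstep[OF rrefl] by fastforce

lemma reach_trans: "reach C j l k2 \<Longrightarrow> reach C i j k1 \<Longrightarrow> reach C i l (k1 + k2)"
proof (induction rule: reach.induct)
  case (rrefl i) then show ?case by simp
next
  case (rstep a b k c w)
  then have "reach C i c ((k1 + k) + w)" by (blast intro: reach.rstep)
  then show ?case by (simp add: add.assoc)
qed

lemma reach_sym: "reach C i j k \<Longrightarrow> reach C j i (-k)"
proof (induction rule: reach.induct)
  case (rrefl i) then show ?case by (simp add: reach.rrefl)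
next
  case (rstep i j k l w)
  have "reach C l j (-w)" by (rule reach_edge[OF edge_sym[OF rstep(2)]])
  from reach_trans[OF rstep.IH this] show ?case by (simp add: add.commute)
qed

definition dead :: "'n cons set \<Rightarrow> 'n \<Rightarrow> bool" where
  "dead C i \<longleftrightarrow> (\<exists>j k. reach C i j k \<and> Zc j \<in> C) \<or> (\<exists>k. k \<noteq> 0 \<and> reach C i i k)"

lemma dead_reach: assumes "reach C i j k" "dead C j" shows "dead C i"
proof -
  from assms(2) consider j' k' where "reach C j j' k'" "Zc j' \<in> C" | k' where "k' \<noteq> 0" "reach C j j k'"
    unfolding dead_def by blast
  then show ?thesis
  proof cases
    case 1
    have "reach C i j' (k + k')" using reach_trans[OF 1(1) assms(1)] .
    then show ?thesis using 1(2) unfolding dead_def by blast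
  next
    case 2
    have "reach C i j (k + k')" using reach_trans[OF 2(2) assms(1)] .
    from reach_trans[OF reach_sym[OF assms(1)] this] have "reach C i i k'" by simp
    then show ?thesis using 2(1) unfolding dead_def by blast
  qed
qed

lemma dead_reach_iff: "reach C i j k \<Longrightarrow> dead C i \<longleftrightarrow> dead C j"
  using dead_reach reach_sym by metis

lemma live_unique: assumes "\<not> dead C i" "reach C i j k" "reach C i j k'" shows "k = k'"
proof (rule ccontr)
  assume "k \<noteq> k'"
  have "reach C i i (k + - k')" using reach_trans[OF reach_sym[OF assms(3)] assms(2)] .
  then have "dead C i" unfolding dead_def using \<open>k \<noteq> k'\<close> by (intro disjI2 exI[of _ "k + - k'"]) auto
  then show False using assms(1) by blast
qed

definition cls :: "'n cons set \<Rightarrow> 'n \<Rightarrow> 'n set" where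
  "cls C i = {j. \<exists>k. reach C i j k}"
definition rep :: "'n cons set \<Rightarrow> 'n \<Rightarrow> 'n" where
  "rep C i = (SOME j. j \<in> cls C i)"
definition off :: "'n cons set \<Rightarrow> 'n \<Rightarrow> int" where
  "off C i = (SOME k. reach C i (rep C i) k)"

lemma rep_cls: "rep C i \<in> cls C i"
  unfolding rep_def by (rule someI[of _ i]) (auto simp: cls_def intro: rrefl)

lemma reach_off: "reach C i (rep C i) (off C i)"
  using rep_cls[of C i] unfolding off_def cls_def by (auto intro: someI)

lemma cls_eq: assumes "reach C i j k" shows "cls C i = cls C j"
proof -
  have "cls C j \<subseteq> cls C i" using reach_trans[OF _ assms] unfolding cls_def by blast
  moreover have "cls C i \<subseteq> cls C j" using reach_trans[OF _ reach_sym[OF assms]] unfolding cls_def by blast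
  ultimately show ?thesis by blast
qed

lemma rep_eq: "reach C i j k \<Longrightarrow> rep C i = rep C j"
  unfolding rep_def using cls_eq by metis

lemma rep_rep: "rep C (rep C i) = rep C i"
  using rep_eq[OF reach_off] by metis

lemma off_rep: assumes "\<not> dead C i" shows "off C (rep C i) = 0"
proof -
  have "\<not> dead C (rep C i)" using assms dead_reach_iff[OF reach_off, of C i] by simp
  moreover have "reach C (rep C i) (rep C i) (off C (rep C i))" using reach_off[of C "rep C i"] by (simp add: rep_rep)
  ultimately show ?thesis by (rule live_unique[OF _ _ rrefl])
qed

definition Reps :: "'n cons set \<Rightarrow> 'n set" where
  "Reps C = rep C ` {i. \<not> dead C i}"

lemma Reps_live: assumes "\<rho> \<in> Reps C" shows "\<not> dead C \<rho> \<and> rep C \<rho> = \<rho> \<and> off C \<rho> = 0"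
proof -
  obtain i where i: "\<not> dead C i" "\<rho> = rep C i" using assms unfolding Reps_def by blast
  have "\<not> dead C \<rho>" using i dead_reach_iff[OF reach_off, of C i] by simp
  moreover have "rep C \<rho> = \<rho>" using i rep_rep by simp
  moreover have "off C \<rho> = 0" using i off_rep by simp
  ultimately show ?thesis by blast
qed

lemma live_off: assumes "\<not> dead C i" "edge C i j r"
  shows "\<not> dead C j \<and> rep C i = rep C j \<and> off C i = r + off C j"
proof -
  have r: "reach C i j r" by (rule reach_edge[OF assms(2)])
  have "\<not> dead C j" using dead_reach_iff[OF r] assms by blast
  moreover have e: "rep C i = rep C j" using rep_eq[OF r] .
  moreover have "reach C i (rep C i) (r + off C j)" using reach_trans[OF reach_off r] e by simp
  then have "off C i = r + off C j" using live_unique[OF assms(1) reach_off] by blast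
  ultimately show ?thesis by blast
qed



definition satR :: "real \<Rightarrow> 'n cons \<Rightarrow> real^'n \<Rightarrow> bool" where
  "satR b c x = (case c of Zc i \<Rightarrow> x$i = 0 | Ec i j r \<Rightarrow> x$i = b^r * x$j)"
definition VR :: "real \<Rightarrow> 'n cons set \<Rightarrow> (real^'n) set" where
  "VR b C = {x. \<forall>c\<in>C. satR b c x}"

lemma edge_real: assumes "b \<noteq> 0" "x \<in> VR b C" "edge C j l w" shows "x$j = b powi w * x$l"
proof -
  from assms(3) consider r where "Ec j l r \<in> C" "w = int r" | r where "Ec l j r \<in> C" "w = - int r"
    unfolding edge_def by blast
  then show ?thesis
  proof cases
    case 1 then show ?thesis using assms(2) by (auto simp: VR_def satR_def)
  next
    case 2 then have "x$l = b^r * x$j" using assms(2) by (fastforce simp: VR_def satR_def)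
    then show ?thesis using 2 assms(1) by (simp add: power_int_minus field_simps)
  qed
qed

lemma reach_real: assumes "b \<noteq> 0" "x \<in> VR b C" shows "reach C i j k \<Longrightarrow> x$i = b powi k * x$j"
proof (induction rule: reach.induct)
  case (rrefl i) show ?case by simp
next
  case (rstep i j k l w)
  have "x$j = b powi w * x$l" using edge_real[OF assms rstep(2)] .
  then show ?case using rstep.IH assms(1) by (simp add: power_int_add mult.assoc)
qed

lemma powi_ne1: assumes "(b::real) > 1" "k \<noteq> 0" shows "b powi k \<noteq> 1"
proof (cases "k > 0")
  case True then show ?thesis using one_less_power_int[OF assms(1)] by force
next
  case False then have "-k > 0" using assms(2) by simp
  then have "b powi (-k) > 1" using one_less_power_int[OF assms(1)] by blast
  moreover have "b powi k = inverse (b powi (-k))" using power_int_minus[of b "-k"] by simp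
  ultimately show ?thesis by (metis inverse_eq_1_iff less_irrefl)
qed

lemma dead_real: assumes "b > 1" "x \<in> VR b C" "dead C i" shows "x$i = 0"
proof -
  have b0: "b \<noteq> 0" using assms(1) by simp
  from assms(3) consider j k where "reach C i j k" "Zc j \<in> C" | k where "k \<noteq> 0" "reach C i i k"
    unfolding dead_def by blast
  then show ?thesis
  proof cases
    case 1
    have "x$j = 0" using 1(2) assms(2) by (fastforce simp: VR_def satR_def)
    then show ?thesis using reach_real[OF b0 assms(2) 1(1)] by simp
  next
    case 2
    have "x$i = b powi k * x$i" using reach_real[OF b0 assms(2) 2(2)] .
    then show ?thesis using powi_ne1[OF assms(1) 2(1)] by (metis mult_cancel_right2)
  qed
qed

definition bvec :: "real \<Rightarrow> 'n cons set \<Rightarrow> 'n \<Rightarrow> real^'n" where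
  "bvec b C \<rho> = (\<chi> i. if \<not> dead C i \<and> rep C i = \<rho> then b powi off C i else 0)"

lemma bvec_in: assumes "b > 1" shows "bvec b C \<rho> \<in> VR b C"
  unfolding VR_def
proof (intro CollectI ballI)
  have b0: "b \<noteq> 0" using assms by simp
  fix c assume c: "c \<in> C"
  show "satR b c (bvec b C \<rho>)"
  proof (cases c)
    case (Zc j)
    have "dead C j" unfolding dead_def using c Zc by (intro disjI1 exI[of _ j] exI[of _ 0]) (simp add: rrefl)
    then show ?thesis using Zc by (simp add: satR_def bvec_def)
  next
    case (Ec i j r)
    have e: "edge C i j (int r)" using c Ec unfolding edge_def by blast
    show ?thesis
    proof (cases "dead C i")
      case True
      then have "dead C j" using dead_reach_iff[OF reach_edge[OF e]] by blast
      then show ?thesis using True Ec by (simp add: satR_def bvec_def)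
    next
      case False
      from live_off[OF False e] have "\<not> dead C j" "rep C i = rep C j" "off C i = int r + off C j" by auto
      have "b powi off C i = b^r * b powi off C j" using \<open>off C i = int r + off C j\<close> b0
        by (simp add: power_int_add)
      then show ?thesis using False Ec \<open>\<not> dead C j\<close> \<open>rep C i = rep C j\<close> by (simp add: satR_def bvec_def)
    qed
  qed
qed

lemma VR_span: assumes "b > 1" "x \<in> VR b C" shows "x \<in> span (bvec b C ` Reps C)"
proof -
  have "x = (\<Sum>\<rho>\<in>Reps C. x$\<rho> *\<^sub>R bvec b C \<rho>)"
  proof (rule vec_eq_iff[THEN iffD2], rule allI)
    fix i
    show "x$i = (\<Sum>\<rho>\<in>Reps C. x$\<rho> *\<^sub>R bvec b C \<rho>)$i"
    proof (cases "dead C i")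
      case True then show ?thesis using dead_real[OF assms True] by (simp add: bvec_def)
    next
      case False
      have rep: "rep C i \<in> Reps C" unfolding Reps_def using False by blast
      have "(\<Sum>\<rho>\<in>Reps C. x$\<rho> *\<^sub>R bvec b C \<rho>)$i = (\<Sum>\<rho>\<in>Reps C. if \<rho> = rep C i then x$\<rho> * b powi off C i else 0)"
        unfolding sum_component by (rule sum.cong) (use False in \<open>auto simp: bvec_def\<close>)
      also have "\<dots> = x$(rep C i) * b powi off C i" using rep by (subst sum.delta) auto
      also have "\<dots> = x$i" using reach_real[OF _ assms(2) reach_off, of i] assms(1) by simp
      finally show ?thesis by simp
    qed
  qed
  also have "\<dots> \<in> span (bvec b C ` Reps C)"
    by (intro span_sum span_mul span_base) auto
  finally show ?thesis .
qed

lemma subspace_VR: "subspace (VR b C)"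
  unfolding subspace_def VR_def satR_def by (auto split: cons.splits simp: algebra_simps)

lemma dim_VR: assumes "b > 1" shows "dim (VR b C) = card (Reps C)"
proof -
  let ?B = "bvec b C ` Reps C"
  have sp: "span ?B = VR b C"
    by (rule span_subspace) (use bvec_in[OF assms] VR_span[OF assms] subspace_VR in auto)
  have nz: "bvec b C \<rho> $ \<rho> \<noteq> 0" if "\<rho> \<in> Reps C" for \<rho>
    using Reps_live[OF that] assms by (simp add: bvec_def)
  have z: "bvec b C \<rho> $ \<rho>' = 0" if "\<rho> \<in> Reps C" "\<rho>' \<in> Reps C" "\<rho> \<noteq> \<rho>'" for \<rho> \<rho>'
    using Reps_live[OF that(2)] that(3) by (simp add: bvec_def)
  have inj: "inj_on (bvec b C) (Reps C)"
    by (rule inj_onI) (metis nz z)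
  have orth: "pairwise orthogonal ?B"
  proof (clarsimp simp: pairwise_def orthogonal_def)
    fix \<rho> \<rho>' assume "\<rho> \<in> Reps C" "\<rho>' \<in> Reps C" "bvec b C \<rho> \<noteq> bvec b C \<rho>'"
    then have "\<rho> \<noteq> \<rho>'" by auto
    then show "bvec b C \<rho> \<bullet> bvec b C \<rho>' = 0"
      unfolding inner_vec_def by (auto simp: bvec_def intro!: sum.neutral)
  qed
  have "0 \<notin> ?B" using nz by force
  then have "independent ?B" using pairwise_orthogonal_independent orth by blast
  then have "dim (span ?B) = card ?B" by (rule dim_span_eq_card_independent)
  then show ?thesis using sp card_image[OF inj] by simp
qed

definition nv :: "real \<Rightarrow> 'n cons \<Rightarrow> real^'n" where
  "nv b c = (case c of Zc i \<Rightarrow> axis i 1 | Ec i j r \<Rightarrow> axis i 1 - (b^r) *\<^sub>R axis j 1)"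
definition hp :: "real \<Rightarrow> 'n cons \<Rightarrow> (real^'n) set" where
  "hp b c = hyperplane (nv b c) 0"

lemma nv_inner: "nv b c \<bullet> x = 0 \<longleftrightarrow> satR b c x"
  by (cases c) (auto simp: nv_def satR_def inner_diff_left inner_axis')

lemma hp_sat: "x \<in> hp b c \<longleftrightarrow> satR b c x"
  by (simp add: hp_def hyperplane_def nv_inner)

lemma hyperplane_normal: assumes "v \<noteq> 0" "hyperplane v 0 = hyperplane c d" shows "c \<in> span {v}"
proof -
  have "0 \<in> hyperplane v 0" by (simp add: hyperplane_def)
  then have "0 \<in> hyperplane c d" using assms(2) by simp
  then have d: "d = 0" by (simp add: hyperplane_def)
  define k where "k = (c \<bullet> v) / (v \<bullet> v)"
  define x where "x = c - k *\<^sub>R v"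
  have vv: "v \<bullet> v \<noteq> 0" using assms(1) by simp
  have "v \<bullet> x = v \<bullet> c - k * (v \<bullet> v)" by (simp add: x_def inner_diff_right)
  also have "\<dots> = 0" using vv by (simp add: k_def inner_commute[of c v])
  finally have vx: "v \<bullet> x = 0" .
  then have "x \<in> hyperplane v 0" by (simp add: hyperplane_def)
  then have "x \<in> hyperplane c d" using assms(2) by simp
  then have cx: "c \<bullet> x = 0" using d by (simp add: hyperplane_def)
  have "(c - k *\<^sub>R v) \<bullet> x = c \<bullet> x - k * (v \<bullet> x)" by (simp add: inner_diff_left)
  then have "x \<bullet> x = c \<bullet> x - k * (v \<bullet> x)" by (simp only: x_def[symmetric])
  then have "x \<bullet> x = 0" using vx cx by simp
  then have "x = 0" by simp
  then have "c = k *\<^sub>R v" by (simp add: x_def)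
  then show ?thesis by (simp add: span_base span_mul)
qed

lemma span_normals: assumes "\<forall>c\<in>C. nv b c \<noteq> 0"
  shows "span (\<Union>H\<in>hp b ` C. normals H) = span (nv b ` C)"
proof (rule span_eq[THEN iffD2], rule conjI)
  show "(\<Union>H\<in>hp b ` C. normals H) \<subseteq> span (nv b ` C)"
  proof
    fix u assume "u \<in> (\<Union>H\<in>hp b ` C. normals H)"
    then obtain c d where c: "c \<in> C" "u \<noteq> 0" "hp b c = hyperplane u d" by (auto simp: normals_def)
    then have "u \<in> span {nv b c}" using hyperplane_normal assms unfolding hp_def by blast
    moreover have "span {nv b c} \<subseteq> span (nv b ` C)" using c by (intro span_mono) auto
    ultimately show "u \<in> span (nv b ` C)" by blast
  qed
  show "nv b ` C \<subseteq> span (\<Union>H\<in>hp b ` C. normals H)"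
  proof
    fix u assume "u \<in> nv b ` C"
    then obtain c where "c \<in> C" "u = nv b c" by blast
    then have "u \<in> normals (hp b c)" using assms by (auto simp: normals_def hp_def)
    then show "u \<in> span (\<Union>H\<in>hp b ` C. normals H)" using \<open>c \<in> C\<close> by (intro span_base) blast
  qed
qed

lemma rank_hp: assumes "b > 1" "\<forall>c\<in>C. nv b c \<noteq> 0"
  shows "arr_rank (hp b ` C :: (real^'n) set set) = CARD('n) - card (Reps C)"
proof -
  let ?S = "nv b ` C"
  have "dim {y \<in> UNIV. \<forall>x\<in>span ?S. orthogonal x y} + dim (span ?S) = dim (UNIV::(real^'n) set)"
    by (rule dim_subspace_orthogonal_to_vectors) (simp_all add: subspace_span)
  moreover have "{y \<in> UNIV. \<forall>x\<in>span ?S. orthogonal x y} = VR b C"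
  proof (intro set_eqI iffI)
    fix y assume y: "y \<in> {y \<in> UNIV. \<forall>x\<in>span ?S. orthogonal x y}"
    show "y \<in> VR b C" unfolding VR_def
    proof (intro CollectI ballI)
      fix c assume "c \<in> C"
      then have "nv b c \<in> span ?S" by (intro span_base) simp
      then have "orthogonal (nv b c) y" using y by blast
      then show "satR b c y" using nv_inner[of b c y] by (simp add: orthogonal_def)
    qed
  next
    fix y assume y: "y \<in> VR b C"
    have "orthogonal x y" if "x \<in> span ?S" for x
    proof -
      have "orthogonal y z" if "z \<in> ?S" for z
      proof -
        obtain c where c: "c \<in> C" "z = nv b c" using \<open>z \<in> ?S\<close> by blast
        then have "satR b c y" using y by (simp add: VR_def)
        then have "nv b c \<bullet> y = 0" using nv_inner[of b c y] by simp
        then show ?thesis using c by (simp add: orthogonal_def inner_commute)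
      qed
      then have "orthogonal y x" by (rule orthogonal_to_span[OF that])
      then show ?thesis by (simp add: orthogonal_commute)
    qed
    then show "y \<in> {y \<in> UNIV. \<forall>x\<in>span ?S. orthogonal x y}" by blast
  qed
  ultimately have "dim (span ?S) = CARD('n) - card (Reps C)" using dim_VR[OF assms(1), of C] by simp
  then show ?thesis unfolding arr_rank_def using span_normals[OF assms(2)] by simp
qed



definition satM :: "nat \<Rightarrow> 'n cons \<Rightarrow> ('n \<Rightarrow> int option) \<Rightarrow> bool" where
  "satM N c y = (case c of Zc i \<Rightarrow> y i = None
     | Ec i j r \<Rightarrow> (y i = None \<and> y j = None) \<or> (\<exists>u. y j = Some u \<and> y i = Some ((u + int r) mod int N)))"
definition vals :: "nat \<Rightarrow> int option set" where "vals N = insert None (Some ` {0..<int N})"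
definition PM :: "nat \<Rightarrow> ('n \<Rightarrow> int option) set" where "PM N = {y. \<forall>i. y i \<in> vals N}"
definition VM :: "nat \<Rightarrow> 'n cons set \<Rightarrow> ('n \<Rightarrow> int option) set" where
  "VM N C = {y \<in> PM N. \<forall>c\<in>C. satM N c y}"

definition sh :: "nat \<Rightarrow> int \<Rightarrow> int \<Rightarrow> int" where "sh N k u = (u + k) mod int N"

lemma vals_sh0: "v \<in> vals N \<Longrightarrow> map_option (sh N 0) v = v"
  by (auto simp: vals_def sh_def)

lemma edge_model: assumes "y \<in> VM N C" "edge C j l w" shows "y j = map_option (sh N w) (y l)"
proof -
  from assms(2) consider r where "Ec j l r \<in> C" "w = int r" | r where "Ec l j r \<in> C" "w = - int r"
    unfolding edge_def by blast
  then show ?thesis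
  proof cases
    case 1 then show ?thesis using assms(1) by (fastforce simp: VM_def satM_def sh_def)
  next
    case 2
    then have s: "(y l = None \<and> y j = None) \<or> (\<exists>u. y j = Some u \<and> y l = Some ((u + int r) mod int N))"
      using assms(1) by (fastforce simp: VM_def satM_def)
    have v: "y j \<in> vals N" using assms(1) by (auto simp: VM_def PM_def)
    show ?thesis
    proof (cases "y j")
      case None then show ?thesis using s by auto
    next
      case (Some u)
      then have u: "0 \<le> u" "u < int N" using v by (auto simp: vals_def)
      have "((u + int r) mod int N - int r) mod int N = (u + int r - int r) mod int N"
        by (rule mod_diff_left_eq)
      then have "((u + int r) mod int N - int r) mod int N = u" using u by simp
      then show ?thesis using s Some 2 by (auto simp: sh_def)
    qed
  qed
qed

lemma reach_model: assumes "y \<in> VM N C" shows "reach C i j k \<Longrightarrow> y i = map_option (sh N k) (y j)"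
proof (induction rule: reach.induct)
  case (rrefl i)
  have "y i \<in> vals N" using assms by (auto simp: VM_def PM_def)
  then show ?case by (simp add: vals_sh0)
next
  case (rstep i j k l w)
  have "y j = map_option (sh N w) (y l)" using edge_model[OF assms rstep(2)] .
  then show ?case using rstep.IH
    by (cases "y l") (simp_all add: sh_def mod_simps add_ac)
qed

definition cycok :: "nat \<Rightarrow> 'n cons set \<Rightarrow> bool" where
  "cycok N C \<longleftrightarrow> (\<forall>i. (\<exists>k. k \<noteq> 0 \<and> reach C i i k) \<longrightarrow> (\<exists>k. k \<noteq> 0 \<and> reach C i i k \<and> \<bar>k\<bar> < int N))"

lemma dead_model: assumes "y \<in> VM N C" "cycok N C" "dead C i" shows "y i = None"
proof -
  from assms(3) consider j k where "reach C i j k" "Zc j \<in> C" | k0 where "k0 \<noteq> 0" "reach C i i k0"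
    unfolding dead_def by blast
  then show ?thesis
  proof cases
    case 1
    have "y j = None" using 1(2) assms(1) by (fastforce simp: VM_def satM_def)
    then show ?thesis using reach_model[OF assms(1) 1(1)] by simp
  next
    case 2
    then obtain k where k: "k \<noteq> 0" "reach C i i k" "\<bar>k\<bar> < int N" using assms(2) unfolding cycok_def by blast
    show ?thesis
    proof (rule ccontr)
      assume "y i \<noteq> None"
      then obtain u where u: "y i = Some u" by auto
      have "y i \<in> vals N" using assms(1) by (simp add: VM_def PM_def)
      then have "u \<in> {0..<int N}" using u by (auto simp: vals_def)
      moreover have "u = (u + k) mod int N" using reach_model[OF assms(1) k(2)] u by (simp add: sh_def)
      ultimately have "(u + k) mod int N = u mod int N" by simp
      then have "int N dvd (u + k) - u" by (simp add: mod_eq_dvd_iff)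
      then have "int N dvd k" by simp
      then have "\<bar>int N\<bar> \<le> \<bar>k\<bar>" using dvd_imp_le_int k(1) by blast
      then show False using k(3) by simp
    qed
  qed
qed

lemma card_vals: "card (vals N) = Suc N"
proof -
  have "card (Some ` {0..<int N}) = N" by (simp add: card_image)
  then show ?thesis unfolding vals_def by (subst card_insert_disjoint) auto
qed

lemma card_VM: fixes C :: "('n::finite) cons set" assumes "N > 0" "cycok N C" shows "card (VM N C) = Suc N ^ card (Reps C)"
proof -
  define g where "g = (\<lambda>f i. if dead C i then None else map_option (sh N (off C i)) (f (rep C i)))"
  have "bij_betw (\<lambda>y. restrict y (Reps C)) (VM N C) (PiE (Reps C) (\<lambda>_. vals N))"
  proof (rule bij_betw_byWitness[where f' = g])
    show "\<forall>y\<in>VM N C. g (restrict y (Reps C)) = y"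
    proof
      fix y assume y: "y \<in> VM N C"
      show "g (restrict y (Reps C)) = y"
      proof
        fix i show "g (restrict y (Reps C)) i = y i"
        proof (cases "dead C i")
          case True then show ?thesis using dead_model[OF y assms(2)] by (simp add: g_def)
        next
          case False
          then have "rep C i \<in> Reps C" unfolding Reps_def by blast
          then show ?thesis using False reach_model[OF y reach_off, of i] by (simp add: g_def)
        qed
      qed
    qed
    show "\<forall>f\<in>PiE (Reps C) (\<lambda>_. vals N). restrict (g f) (Reps C) = f"
    proof
      fix f assume f: "f \<in> PiE (Reps C) (\<lambda>_. vals N)"
      show "restrict (g f) (Reps C) = f"
      proof
        fix i show "restrict (g f) (Reps C) i = f i"
        proof (cases "i \<in> Reps C")
          case True
          then show ?thesis using Reps_live[OF True] f vals_sh0 by (auto simp: g_def)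
        next
          case False then show ?thesis using f by (auto simp: PiE_def extensional_def)
        qed
      qed
    qed
    show "(\<lambda>y. restrict y (Reps C)) ` VM N C \<subseteq> PiE (Reps C) (\<lambda>_. vals N)"
      by (auto simp: VM_def PM_def)
    show "g ` PiE (Reps C) (\<lambda>_. vals N) \<subseteq> VM N C"
    proof
      fix y assume "y \<in> g ` PiE (Reps C) (\<lambda>_. vals N)"
      then obtain f where f: "f \<in> PiE (Reps C) (\<lambda>_. vals N)" and y: "y = g f" by blast
      have "y i \<in> vals N" for i
      proof (cases "dead C i \<or> f (rep C i) = None")
        case True then show ?thesis by (auto simp: y g_def vals_def)
      next
        case False
        then obtain u where "\<not> dead C i" "f (rep C i) = Some u" by auto
        moreover have "0 \<le> (u + off C i) mod int N" "(u + off C i) mod int N < int N" using assms(1) by simp_all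
        ultimately show ?thesis by (auto simp: y g_def vals_def sh_def)
      qed
      then have "y \<in> PM N" by (simp add: PM_def)
      moreover have "satM N c y" if c: "c \<in> C" for c
      proof (cases c)
        case (Zc j)
        have "dead C j" unfolding dead_def using c Zc by (intro disjI1 exI[of _ j] exI[of _ 0]) (simp add: rrefl)
        then show ?thesis using Zc by (simp add: satM_def y g_def)
      next
        case (Ec i j r)
        have e: "edge C i j (int r)" using c Ec unfolding edge_def by blast
        show ?thesis
        proof (cases "dead C i")
          case True
          then have "dead C j" using dead_reach_iff[OF reach_edge[OF e]] by blast
          then show ?thesis using True Ec by (simp add: satM_def y g_def)
        next
          case False
          from live_off[OF False e] have l: "\<not> dead C j" "rep C i = rep C j" "off C i = int r + off C j" by auto
          show ?thesis
          proof (cases "f (rep C j)")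
            case None then show ?thesis using False l Ec by (simp add: satM_def y g_def)
          next
            case (Some u)
            have "(u + (int r + off C j)) mod int N = ((u + off C j) mod int N + int r) mod int N"
              by (simp add: mod_simps add_ac)
            then show ?thesis using False l Ec Some by (simp add: satM_def y g_def sh_def)
          qed
        qed
      qed
      ultimately show "y \<in> VM N C" by (simp add: VM_def)
    qed
  qed
  then have "card (VM N C) = card (PiE (Reps C) (\<lambda>_. vals N))" by (rule bij_betw_same_card)
  also have "\<dots> = Suc N ^ card (Reps C)" by (simp add: card_PiE[OF finite] card_vals)
  finally show ?thesis .
qed



definition ff :: "nat \<Rightarrow> nat \<Rightarrow> nat" where "ff X k = (\<Prod>i<k. X - i)"
definition FF :: "nat \<Rightarrow> nat \<Rightarrow> nat \<Rightarrow> nat" where "FF m k L = ff (L - (k - 1) * m) k"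

lemma ff_0 [simp]: "ff X 0 = 1" by (simp add: ff_def)
lemma ff_Suc: "ff X (Suc k) = ff X k * (X - k)" by (simp add: ff_def)
lemma ff_Suc_Suc: "ff (Suc X) (Suc k) = Suc X * ff X k"
  unfolding ff_def prod.lessThan_Suc_shift by simp
lemma ff_zero: "X < k \<Longrightarrow> ff X k = 0"
  unfolding ff_def by (rule prod_zero) auto

lemma ff_rec: "ff (Suc X) (Suc j) = ff X (Suc j) + Suc j * ff X j"
proof -
  have a: "ff (Suc X) (Suc j) = Suc X * ff X j" by (rule ff_Suc_Suc)
  have b: "ff X (Suc j) = ff X j * (X - j)" by (rule ff_Suc)
  show ?thesis
  proof (cases "j \<le> X")
    case True
    have "Suc X = (X - j) + Suc j" using True by simp
    then have "Suc X * ff X j = (X - j) * ff X j + Suc j * ff X j" by (metis add_mult_distrib)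
    then show ?thesis using a b by (simp add: mult.commute)
  next
    case False
    then have "ff X j = 0" by (intro ff_zero) simp
    then show ?thesis using a b by simp
  qed
qed

lemma FF_rec: "FF m k (Suc L) = FF m k L + k * FF m (k - 1) (L - m)"
proof (cases k)
  case 0 then show ?thesis by (simp add: FF_def)
next
  case (Suc j)
  show ?thesis
  proof (cases "j * m \<le> L")
    case True
    have a: "Suc L - j * m = Suc (L - j * m)" using True by simp
    have b: "ff (L - m - (j - 1) * m) j = ff (L - j * m) j"
    proof (cases j)
      case 0 then show ?thesis by simp
    next
      case (Suc j')
      then have "L - m - (j - 1) * m = L - j * m" by (simp add: diff_diff_left algebra_simps)
      then show ?thesis by simp
    qed
    show ?thesis using Suc a b ff_rec[of "L - j * m" j] by (simp add: FF_def)
  next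
    case False
    then have j: "j \<ge> 1" by (cases j) auto
    have a: "Suc L - j * m = 0" using False by simp
    have "L - j * m = 0" using False by simp
    moreover have "L - m - (j - 1) * m = 0"
    proof -
      have "m + (j - 1) * m = j * m" using j by (cases j) auto
      then show ?thesis using False by (simp add: diff_diff_left)
    qed
    ultimately show ?thesis using Suc a j by (simp add: FF_def ff_zero)
  qed
qed

definition gapok :: "nat \<Rightarrow> int \<Rightarrow> int \<Rightarrow> bool" where "gapok m p q \<longleftrightarrow> p + int m < q \<or> q + int m < p"
definition LS :: "nat \<Rightarrow> 'n set \<Rightarrow> nat \<Rightarrow> ('n \<Rightarrow> int) set" where
  "LS m I L = {w \<in> I \<rightarrow>\<^sub>E {0..<int L}. \<forall>i\<in>I. \<forall>j\<in>I. i \<noteq> j \<longrightarrow> gapok m (w i) (w j)}"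

lemma finite_LS: assumes "finite I" shows "finite (LS m I L)"
proof -
  have "LS m I L \<subseteq> I \<rightarrow>\<^sub>E {0..<int L}" by (auto simp: LS_def)
  moreover have "finite (I \<rightarrow>\<^sub>E {0..<int L})" using assms by (simp add: finite_PiE)
  ultimately show ?thesis by (rule finite_subset)
qed

lemma card_T: assumes "finite I" "i \<in> I"
  shows "card {w \<in> LS m I (Suc L). w i = int L} = card (LS m (I - {i}) (L - m))"
proof -
  have "bij_betw (\<lambda>w. restrict w (I - {i})) {w \<in> LS m I (Suc L). w i = int L} (LS m (I - {i}) (L - m))"
  proof (rule bij_betw_byWitness[where f' = "\<lambda>v. v(i := int L)"])
    show "\<forall>w\<in>{w \<in> LS m I (Suc L). w i = int L}. (restrict w (I - {i}))(i := int L) = w"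
      by (auto simp: LS_def PiE_def extensional_def fun_eq_iff)
    show "\<forall>v\<in>LS m (I - {i}) (L - m). restrict (v(i := int L)) (I - {i}) = v"
      by (auto simp: LS_def PiE_def extensional_def fun_eq_iff)
    show "(\<lambda>w. restrict w (I - {i})) ` {w \<in> LS m I (Suc L). w i = int L} \<subseteq> LS m (I - {i}) (L - m)"
    proof clarify
      fix w assume w: "w \<in> LS m I (Suc L)" "w i = int L"
      have "w j < int (L - m)" if "j \<in> I - {i}" for j
      proof -
        have "gapok m (w j) (w i)" using w(1) that assms(2) unfolding LS_def by blast
        moreover have "0 \<le> w j" "w j < int (Suc L)" using w(1) that unfolding LS_def by (auto simp: PiE_def Pi_def)
        ultimately show ?thesis using w(2) by (cases "m \<le> L") (auto simp: gapok_def of_nat_diff)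
      qed
      moreover have "0 \<le> w j" if "j \<in> I" for j using w(1) that by (auto simp: LS_def PiE_def Pi_def)
      ultimately have "restrict w (I - {i}) \<in> (I - {i}) \<rightarrow>\<^sub>E {0..<int (L - m)}"
        by (simp add: restrict_PiE_iff)
      moreover have "\<forall>a\<in>I - {i}. \<forall>c\<in>I - {i}. a \<noteq> c \<longrightarrow> gapok m (restrict w (I - {i}) a) (restrict w (I - {i}) c)"
        using w(1) unfolding LS_def by auto
      ultimately show "restrict w (I - {i}) \<in> LS m (I - {i}) (L - m)" unfolding LS_def by blast
    qed
    show "(\<lambda>v. v(i := int L)) ` LS m (I - {i}) (L - m) \<subseteq> {w \<in> LS m I (Suc L). w i = int L}"
    proof clarify
      fix v assume v: "v \<in> LS m (I - {i}) (L - m)"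
      have vj: "0 \<le> v j \<and> v j + int m < int L" if "j \<in> I - {i}" for j
      proof -
        have "v j \<in> {0..<int (L - m)}" using v that unfolding LS_def by (blast intro: PiE_mem)
        then show ?thesis by (cases "m \<le> L") (auto simp: of_nat_diff)
      qed
      have "v(i := int L) \<in> I \<rightarrow>\<^sub>E {0..<int (Suc L)}"
      proof (rule PiE_I)
        fix j assume j: "j \<in> I"
        show "(v(i := int L)) j \<in> {0..<int (Suc L)}"
        proof (cases "j = i")
          case True then show ?thesis by simp
        next
          case False
          then have "0 \<le> v j" "v j + int m < int L" using vj j by auto
          then show ?thesis using False by simp
        qed
      next
        fix j assume j: "j \<notin> I"
        then have "j \<noteq> i" "j \<notin> I - {i}" using assms(2) by auto
        moreover have "v \<in> (I - {i}) \<rightarrow>\<^sub>E {0..<int (L - m)}" using v unfolding LS_def by blast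
        ultimately have "v j = undefined" using PiE_arb by metis
        then show "(v(i := int L)) j = undefined" using \<open>j \<noteq> i\<close> by simp
      qed
      moreover have "gapok m ((v(i := int L)) j) ((v(i := int L)) j')" if "j \<in> I" "j' \<in> I" "j \<noteq> j'" for j j'
      proof (cases "j = i \<or> j' = i")
        case True
        then show ?thesis using vj that by (auto simp: gapok_def)
      next
        case False
        then show ?thesis using v that unfolding LS_def by auto
      qed
      ultimately show "v(i := int L) \<in> LS m I (Suc L) \<and> (v(i := int L)) i = int L" by (simp add: LS_def)
    qed
  qed
  then show ?thesis by (rule bij_betw_same_card)
qed

lemma card_LS_rec: assumes "finite I"
  shows "card (LS m I (Suc L)) = card (LS m I L) + (\<Sum>i\<in>I. card (LS m (I - {i}) (L - m)))"
proof -
  let ?T = "\<lambda>i. {w \<in> LS m I (Suc L). w i = int L}"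
  have eq: "LS m I (Suc L) = LS m I L \<union> (\<Union>i\<in>I. ?T i)"
  proof (intro set_eqI iffI)
    fix w assume w: "w \<in> LS m I (Suc L)"
    show "w \<in> LS m I L \<union> (\<Union>i\<in>I. ?T i)"
    proof (cases "\<exists>i\<in>I. w i = int L")
      case True then show ?thesis using w by blast
    next
      case False
      then have "w \<in> LS m I L" using w by (force simp: LS_def PiE_def Pi_def)
      then show ?thesis by blast
    qed
  next
    fix w assume "w \<in> LS m I L \<union> (\<Union>i\<in>I. ?T i)"
    then show "w \<in> LS m I (Suc L)" by (force simp: LS_def PiE_def Pi_def)
  qed
  have d1: "LS m I L \<inter> (\<Union>i\<in>I. ?T i) = {}" by (force simp: LS_def PiE_def Pi_def)
  have d2: "\<forall>i\<in>I. \<forall>j\<in>I. i \<noteq> j \<longrightarrow> ?T i \<inter> ?T j = {}"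
  proof (intro ballI impI)
    fix i j assume ij: "i \<in> I" "j \<in> I" "i \<noteq> j"
    show "?T i \<inter> ?T j = {}"
    proof (rule ccontr)
      assume "?T i \<inter> ?T j \<noteq> {}"
      then obtain w where w: "w \<in> LS m I (Suc L)" "w i = int L" "w j = int L" by blast
      then have "gapok m (w i) (w j)" using ij unfolding LS_def by blast
      then show False using w by (simp add: gapok_def)
    qed
  qed
  have fT: "\<forall>i\<in>I. finite (?T i)"
  proof
    fix i show "finite (?T i)" by (rule finite_subset[of _ "LS m I (Suc L)"]) (auto simp: finite_LS[OF assms])
  qed
  have fU: "finite (\<Union>i\<in>I. ?T i)" by (rule finite_UN_I[OF assms]) (use fT in simp)
  have "card (LS m I (Suc L)) = card (LS m I L \<union> (\<Union>i\<in>I. ?T i))"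
    using eq by (rule arg_cong)
  also have "\<dots> = card (LS m I L) + card (\<Union>i\<in>I. ?T i)"
    by (rule card_Un_disjoint[OF finite_LS[OF assms] fU d1])
  also have "card (\<Union>i\<in>I. ?T i) = (\<Sum>i\<in>I. card (?T i))"
    by (rule card_UN_disjoint[OF assms fT d2])
  also have "\<dots> = (\<Sum>i\<in>I. card (LS m (I - {i}) (L - m)))"
    by (rule sum.cong) (use card_T[OF assms] in auto)
  finally show ?thesis .
qed

lemma card_LS: "finite I \<Longrightarrow> card (LS m I L) = FF m (card I) L"
proof (induction L arbitrary: I rule: less_induct)
  case (less L)
  show ?case
  proof (cases L)
    case 0
    show ?thesis
    proof (cases "I = {}")
      case True then show ?thesis using 0 by (simp add: LS_def FF_def)
    next
      case False
      then have "LS m I 0 = {}" by (auto simp: LS_def PiE_eq_empty_iff)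
      moreover have "card I \<ge> 1" using False less.prems by (simp add: Suc_leI card_gt_0_iff)
      ultimately show ?thesis using 0 by (simp add: FF_def ff_zero)
    qed
  next
    case (Suc L')
    have IH1: "card (LS m I L') = FF m (card I) L'" using less.IH[of L' I] less.prems Suc by simp
    have IH2: "card (LS m (I - {i}) (L' - m)) = FF m (card I - 1) (L' - m)" if "i \<in> I" for i
      using less.IH[of "L' - m" "I - {i}"] less.prems Suc that by (simp add: card_Diff_singleton)
    have "card (LS m I (Suc L')) = card (LS m I L') + (\<Sum>i\<in>I. card (LS m (I - {i}) (L' - m)))"
      by (rule card_LS_rec[OF less.prems])
    also have "\<dots> = FF m (card I) L' + (\<Sum>i\<in>I. FF m (card I - 1) (L' - m))"
      using IH1 IH2 by simp
    also have "\<dots> = FF m (card I) (Suc L')" by (simp add: FF_rec)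
    finally show ?thesis using Suc by simp
  qed
qed



definition cnd :: "nat \<Rightarrow> nat \<Rightarrow> int \<Rightarrow> int \<Rightarrow> bool" where
  "cnd N m p q \<longleftrightarrow> (\<forall>r\<in>{0..int m}. (p - q - r) mod int N \<noteq> 0 \<and> (q - p - r) mod int N \<noteq> 0)"
definition QS :: "nat \<Rightarrow> nat \<Rightarrow> 'n set \<Rightarrow> ('n \<Rightarrow> int) set" where
  "QS N m I = {z \<in> I \<rightarrow>\<^sub>E {0..<int N}. \<forall>i\<in>I. \<forall>j\<in>I. i \<noteq> j \<longrightarrow> cnd N m (z i) (z j)}"

lemma cnd_sym: "cnd N m p q = cnd N m q p"
  unfolding cnd_def by (auto simp: conj_commute)

lemma cnd_shift: "cnd N m ((p + s) mod int N) ((q + s) mod int N) = cnd N m p q"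
proof -
  have "((p + s) mod int N - (q + s) mod int N - r) mod int N = (p - q - r) mod int N" for p q r
  proof -
    have "((p + s) mod int N - (q + s) mod int N - r) mod int N = ((p + s) mod int N - ((q + s) mod int N + r)) mod int N"
      by (simp add: algebra_simps)
    also have "\<dots> = (p + s - ((q + s) mod int N + r)) mod int N" by (rule mod_diff_left_eq)
    also have "\<dots> = (p + s - r - (q + s) mod int N) mod int N" by (simp add: algebra_simps)
    also have "\<dots> = (p + s - r - (q + s)) mod int N" by (rule mod_diff_right_eq)
    also have "\<dots> = (p - q - r) mod int N" by (simp add: algebra_simps)
    finally show ?thesis .
  qed
  then show ?thesis unfolding cnd_def by simp
qed

lemma modz: assumes "\<bar>x\<bar> < int N" shows "(x mod int N = 0) = (x = 0)"
proof
  assume "x mod int N = 0"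
  then have d: "int N dvd x" by (simp add: mod_eq_0_iff_dvd)
  show "x = 0"
  proof (rule ccontr)
    assume "x \<noteq> 0"
    then have "\<bar>int N\<bar> \<le> \<bar>x\<bar>" using d by (rule dvd_imp_le_int)
    then show False using assms by simp
  qed
qed simp

lemma cnd_0: assumes "0 \<le> d" "d < int N" "2*m + 1 < N"
  shows "cnd N m d 0 \<longleftrightarrow> int m + 1 \<le> d \<and> d \<le> int N - int m - 1"
proof
  assume c: "cnd N m d 0"
  show "int m + 1 \<le> d \<and> d \<le> int N - int m - 1"
  proof (rule ccontr)
    assume "\<not> (int m + 1 \<le> d \<and> d \<le> int N - int m - 1)"
    then consider "d \<le> int m" | "d \<ge> int N - int m" by linarith
    then show False
    proof cases
      case 1 then have "d \<in> {0..int m}" using assms(1) by simp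
      then have "(d - 0 - d) mod int N \<noteq> 0 \<and> (0 - d - d) mod int N \<noteq> 0" using c unfolding cnd_def by (rule bspec[rotated])
      then show False by simp
    next
      case 2
      then have "int N - d \<in> {0..int m}" using assms(2) by simp
      then have "(d - 0 - (int N - d)) mod int N \<noteq> 0 \<and> (0 - d - (int N - d)) mod int N \<noteq> 0" using c unfolding cnd_def by (rule bspec[rotated])
      then show False by simp
    qed
  qed
next
  assume d: "int m + 1 \<le> d \<and> d \<le> int N - int m - 1"
  show "cnd N m d 0" unfolding cnd_def
  proof
    fix r assume r: "r \<in> {0..int m}"
    have a: "\<bar>d - 0 - r\<bar> < int N" "d - 0 - r \<noteq> 0" "\<bar>0 - d - r\<bar> < int N" "0 - d - r \<noteq> 0"
      using r d assms by auto
    show "(d - 0 - r) mod int N \<noteq> 0 \<and> (0 - d - r) mod int N \<noteq> 0"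
      using modz[OF a(1)] modz[OF a(3)] a(2,4) by simp
  qed
qed

lemma cnd_gap: assumes "int m + 1 \<le> d" "d \<le> int N - int m - 1" "int m + 1 \<le> d'" "d' \<le> int N - int m - 1"
  shows "cnd N m d d' \<longleftrightarrow> gapok m (d - int m - 1) (d' - int m - 1)"
proof
  assume c: "cnd N m d d'"
  show "gapok m (d - int m - 1) (d' - int m - 1)"
  proof (rule ccontr)
    assume "\<not> ?thesis"
    then consider "0 \<le> d - d'" "d - d' \<le> int m" | "0 \<le> d' - d" "d' - d \<le> int m" unfolding gapok_def by linarith
    then show False
    proof cases
      case 1
      then have "d - d' \<in> {0..int m}" by simp
      then have "(d - d' - (d - d')) mod int N \<noteq> 0 \<and> (d' - d - (d - d')) mod int N \<noteq> 0" using c unfolding cnd_def by (rule bspec[rotated])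
      then show False by simp
    next
      case 2
      then have "d' - d \<in> {0..int m}" by simp
      then have "(d - d' - (d' - d)) mod int N \<noteq> 0 \<and> (d' - d - (d' - d)) mod int N \<noteq> 0" using c unfolding cnd_def by (rule bspec[rotated])
      then show False by simp
    qed
  qed
next
  assume g: "gapok m (d - int m - 1) (d' - int m - 1)"
  show "cnd N m d d'" unfolding cnd_def
  proof
    fix r assume r: "r \<in> {0..int m}"
    have a: "\<bar>d - d' - r\<bar> < int N" "d - d' - r \<noteq> 0" "\<bar>d' - d - r\<bar> < int N" "d' - d - r \<noteq> 0"
      using r g assms by (auto simp: gapok_def)
    show "(d - d' - r) mod int N \<noteq> 0 \<and> (d' - d - r) mod int N \<noteq> 0"
      using modz[OF a(1)] modz[OF a(3)] a(2,4) by simp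
  qed
qed

lemma LS_mem: "w \<in> LS m I L \<Longrightarrow> j \<in> I \<Longrightarrow> 0 \<le> w j \<and> w j < int L"
  unfolding LS_def using PiE_mem by fastforce
lemma LS_gap: "w \<in> LS m I L \<Longrightarrow> i \<in> I \<Longrightarrow> j \<in> I \<Longrightarrow> i \<noteq> j \<Longrightarrow> gapok m (w i) (w j)"
  unfolding LS_def by blast
lemma LS_ext: "w \<in> LS m I L \<Longrightarrow> j \<notin> I \<Longrightarrow> w j = undefined"
  unfolding LS_def using PiE_arb by fastforce
lemma LS_intro: "(\<And>j. j \<in> I \<Longrightarrow> 0 \<le> w j \<and> w j < int L) \<Longrightarrow> (\<And>j. j \<notin> I \<Longrightarrow> w j = undefined)
  \<Longrightarrow> (\<And>i j. i \<in> I \<Longrightarrow> j \<in> I \<Longrightarrow> i \<noteq> j \<Longrightarrow> gapok m (w i) (w j)) \<Longrightarrow> w \<in> LS m I L"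
  unfolding LS_def by (auto intro!: PiE_I)

lemma QS_mem: "z \<in> QS N m I \<Longrightarrow> j \<in> I \<Longrightarrow> 0 \<le> z j \<and> z j < int N"
  unfolding QS_def using PiE_mem by fastforce
lemma QS_cnd: "z \<in> QS N m I \<Longrightarrow> i \<in> I \<Longrightarrow> j \<in> I \<Longrightarrow> i \<noteq> j \<Longrightarrow> cnd N m (z i) (z j)"
  unfolding QS_def by blast
lemma QS_ext: "z \<in> QS N m I \<Longrightarrow> j \<notin> I \<Longrightarrow> z j = undefined"
  unfolding QS_def using PiE_arb by fastforce
lemma QS_intro: "(\<And>j. j \<in> I \<Longrightarrow> 0 \<le> z j \<and> z j < int N) \<Longrightarrow> (\<And>j. j \<notin> I \<Longrightarrow> z j = undefined)
  \<Longrightarrow> (\<And>i j. i \<in> I \<Longrightarrow> j \<in> I \<Longrightarrow> i \<noteq> j \<Longrightarrow> cnd N m (z i) (z j)) \<Longrightarrow> z \<in> QS N m I"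
  unfolding QS_def by (auto intro!: PiE_I)

lemma card_QS: assumes "finite I" "i0 \<in> I" "2*m + 1 < N"
  shows "card (QS N m I) = N * card (LS m (I - {i0}) (N - 2*m - 1))"
proof -
  define f where "f = (\<lambda>z. (z i0, \<lambda>j\<in>I - {i0}. (z j - z i0) mod int N - int m - 1))"
  define g where "g = (\<lambda>(s, w). \<lambda>j\<in>I. if j = i0 then s else (w j + int m + 1 + s) mod int N)"
  have NN: "int (N - 2*m - 1) = int N - 2 * int m - 1" using assms(3) by simp
  have N0: "N > 0" using assms(3) by simp
  have "bij_betw f (QS N m I) ({0..<int N} \<times> LS m (I - {i0}) (N - 2*m - 1))"
  proof (rule bij_betw_byWitness[where f' = g])
    show "\<forall>z\<in>QS N m I. g (f z) = z"
    proof
      fix z assume z: "z \<in> QS N m I"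
      show "g (f z) = z"
      proof
        fix j
        show "g (f z) j = z j"
        proof (cases "j \<in> I")
          case False then show ?thesis using QS_ext[OF z False] by (simp add: g_def f_def)
        next
          case True
          have zj: "0 \<le> z j" "z j < int N" using QS_mem[OF z True] by auto
          have "((z j - z i0) mod int N - int m - 1 + int m + 1 + z i0) mod int N = ((z j - z i0) mod int N + z i0) mod int N"
            by simp
          also have "\<dots> = (z j - z i0 + z i0) mod int N" by (rule mod_add_left_eq)
          also have "\<dots> = z j" using zj by simp
          finally show ?thesis using True by (simp add: g_def f_def)
        qed
      qed
    qed
    show "\<forall>a'\<in>{0..<int N} \<times> LS m (I - {i0}) (N - 2*m - 1). f (g a') = a'"
    proof
      fix a' assume a': "a' \<in> {0..<int N} \<times> LS m (I - {i0}) (N - 2*m - 1)"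
      then obtain s w where sw: "a' = (s, w)" "s \<in> {0..<int N}" "w \<in> LS m (I - {i0}) (N - 2*m - 1)" by blast
      have "(\<lambda>j\<in>I - {i0}. ((w j + int m + 1 + s) mod int N - s) mod int N - int m - 1) = w"
      proof
        fix j show "(\<lambda>j\<in>I - {i0}. ((w j + int m + 1 + s) mod int N - s) mod int N - int m - 1) j = w j"
        proof (cases "j \<in> I - {i0}")
          case True
          have wj: "0 \<le> w j" "w j < int N - 2 * int m - 1" using LS_mem[OF sw(3) True] NN by auto
          have "((w j + int m + 1 + s) mod int N - s) mod int N = (w j + int m + 1 + s - s) mod int N"
            by (rule mod_diff_left_eq)
          also have "\<dots> = w j + int m + 1" using wj by simp
          finally show ?thesis using True by simp
        next
          case False then show ?thesis using LS_ext[OF sw(3) False] False by auto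
        qed
      qed
      moreover have "f (g a') = (s, \<lambda>j\<in>I - {i0}. ((w j + int m + 1 + s) mod int N - s) mod int N - int m - 1)"
        using assms(2) unfolding sw(1) f_def g_def by (auto intro!: restrict_ext split: if_splits)
      ultimately show "f (g a') = a'" using sw(1) by simp
    qed
    show "f ` QS N m I \<subseteq> {0..<int N} \<times> LS m (I - {i0}) (N - 2*m - 1)"
    proof (rule image_subsetI)
      fix z assume z: "z \<in> QS N m I"
      define d where "d = (\<lambda>j. (z j + - z i0) mod int N)"
      have d0: "0 \<le> d j" "d j < int N" for j using N0 by (auto simp: d_def)
      have zi0: "z i0 \<in> {0..<int N}" using QS_mem[OF z assms(2)] by simp
      have cz: "cnd N m (d j) (d j')" if "j \<in> I" "j' \<in> I" "j \<noteq> j'" for j j'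
        unfolding d_def cnd_shift by (rule QS_cnd[OF z that])
      have di0: "d i0 = 0" by (simp add: d_def)
      have rng: "int m + 1 \<le> d j \<and> d j \<le> int N - int m - 1" if "j \<in> I - {i0}" for j
      proof -
        have "cnd N m (d j) (d i0)" using cz[of j i0] that assms(2) by blast
        then show ?thesis using di0 cnd_0[OF d0 assms(3)] by simp
      qed
      have "(\<lambda>j\<in>I - {i0}. d j - int m - 1) \<in> LS m (I - {i0}) (N - 2*m - 1)"
      proof (rule LS_intro)
        fix j assume "j \<in> I - {i0}"
        then show "0 \<le> (\<lambda>j\<in>I - {i0}. d j - int m - 1) j \<and> (\<lambda>j\<in>I - {i0}. d j - int m - 1) j < int (N - 2*m - 1)"
          using rng[of j] NN by simp
      next
        fix j assume "j \<notin> I - {i0}" then show "(\<lambda>j\<in>I - {i0}. d j - int m - 1) j = undefined" by auto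
      next
        fix i j assume ij: "i \<in> I - {i0}" "j \<in> I - {i0}" "i \<noteq> j"
        have "cnd N m (d i) (d j)" using cz ij by blast
        then have "gapok m (d i - int m - 1) (d j - int m - 1)"
          using cnd_gap rng[OF ij(1)] rng[OF ij(2)] by blast
        then show "gapok m ((\<lambda>j\<in>I - {i0}. d j - int m - 1) i) ((\<lambda>j\<in>I - {i0}. d j - int m - 1) j)"
          using ij by simp
      qed
      moreover have "f z = (z i0, \<lambda>j\<in>I - {i0}. d j - int m - 1)" by (simp add: f_def d_def)
      ultimately show "f z \<in> {0..<int N} \<times> LS m (I - {i0}) (N - 2*m - 1)"
        using zi0 by simp
    qed
    show "g ` ({0..<int N} \<times> LS m (I - {i0}) (N - 2*m - 1)) \<subseteq> QS N m I"
    proof (rule image_subsetI)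
      fix a' assume "a' \<in> {0..<int N} \<times> LS m (I - {i0}) (N - 2*m - 1)"
      then obtain s w where a': "a' = (s, w)" and s: "s \<in> {0..<int N}" and w: "w \<in> LS m (I - {i0}) (N - 2*m - 1)" by blast
      define e where "e = (\<lambda>j. if j = i0 then 0 else w j + int m + 1)"
      have erng: "int m + 1 \<le> e j \<and> e j \<le> int N - int m - 1" if "j \<in> I - {i0}" for j
        using LS_mem[OF w that] NN that by (simp add: e_def)
      have e: "0 \<le> e j \<and> e j < int N" if "j \<in> I" for j
        using erng[of j] that using N0 by (cases "j = i0") (auto simp: e_def)
      have gj: "g (s, w) j = (e j + s) mod int N" if "j \<in> I" for j
        using that s by (auto simp: g_def e_def)
      have ce: "cnd N m (e j) (e j')" if "j \<in> I" "j' \<in> I" "j \<noteq> j'" for j j'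
      proof -
        have A: "cnd N m (e j') (e i0)" if j': "j' \<in> I - {i0}" for j'
        proof -
          have "e i0 = 0" by (simp add: e_def)
          then show ?thesis using cnd_0[of "e j'" N m] e[of j'] erng[OF j'] assms(3) j' by simp
        qed
        show ?thesis
        proof (cases "j = i0 \<or> j' = i0")
          case True
          then show ?thesis
          proof
            assume "j = i0" then show ?thesis using A[of j'] that cnd_sym by simp
          next
            assume "j' = i0" then show ?thesis using A[of j] that by simp
          qed
        next
          case False
          then have jj: "j \<in> I - {i0}" "j' \<in> I - {i0}" using that by auto
          have "gapok m (w j) (w j')" using LS_gap[OF w jj that(3)] .
          moreover have "w j = e j - int m - 1" "w j' = e j' - int m - 1" using False by (simp_all add: e_def)
          ultimately show ?thesis using cnd_gap erng[OF jj(1)] erng[OF jj(2)] by simp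
        qed
      qed
      show "g a' \<in> QS N m I" unfolding a'
      proof (rule QS_intro)
        fix j assume "j \<in> I" then show "0 \<le> g (s, w) j \<and> g (s, w) j < int N" using gj N0 by simp
      next
        fix j assume "j \<notin> I" then show "g (s, w) j = undefined" by (simp add: g_def)
      next
        fix i j assume ij: "i \<in> I" "j \<in> I" "i \<noteq> j"
        then show "cnd N m (g (s, w) i) (g (s, w) j)" using gj cnd_shift ce[OF ij] by simp
      qed
    qed
  qed
  then have "card (QS N m I) = card ({0..<int N} \<times> LS m (I - {i0}) (N - 2*m - 1))" by (rule bij_betw_same_card)
  also have "\<dots> = N * card (LS m (I - {i0}) (N - 2*m - 1))" by (simp add: card_cartesian_product)
  finally show ?thesis .
qed



definition consA :: "nat \<Rightarrow> 'n cons set" where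
  "consA m = range Zc \<union> {Ec i j r | i j r. i \<noteq> j \<and> r \<le> m}"

lemma finite_consA: "finite (consA (m::nat) :: ('n::finite) cons set)"
proof -
  have "consA m \<subseteq> range Zc \<union> (\<lambda>(i,j,r). Ec i j r) ` (UNIV \<times> UNIV \<times> {..m})"
  proof
    fix c assume "c \<in> consA m"
    then consider i where "c = Zc i" | i j r where "r \<le> m" "c = Ec i j r" unfolding consA_def by blast
    then show "c \<in> range Zc \<union> (\<lambda>(i,j,r). Ec i j r) ` (UNIV \<times> UNIV \<times> {..m})"
    proof cases
      case 1 then show ?thesis by simp
    next
      case 2 then have "c = (\<lambda>(i,j,r). Ec i j r) (i, j, r)" "(i, j, r) \<in> UNIV \<times> UNIV \<times> {..m}" by auto
      then show ?thesis by blast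
    qed
  qed
  then show ?thesis by (rule finite_subset) auto
qed

lemma arrA_eq: "arrA a m = hp (real_of_int a) ` consA m"
proof (intro set_eqI iffI)
  fix H assume "H \<in> arrA a m"
  then consider i where "H = hyperplane (axis i 1) 0"
    | i j where "i \<noteq> j" "H = hyperplane (axis i 1 - axis j 1) 0"
    | i j r where "i \<noteq> j" "1 \<le> r" "r \<le> m" "H = hyperplane (axis i 1 - (real_of_int a ^ r) *\<^sub>R axis j 1) 0"
    unfolding arrA_def by blast
  then show "H \<in> hp (real_of_int a) ` consA m"
  proof cases
    case 1 then show ?thesis unfolding consA_def hp_def nv_def image_iff
      by (intro bexI[of _ "Zc i"]) auto
  next
    case 2 then show ?thesis unfolding consA_def hp_def nv_def image_iff
      by (intro bexI[of _ "Ec i j 0"]) auto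
  next
    case 3 then show ?thesis unfolding consA_def hp_def nv_def image_iff
      by (intro bexI[of _ "Ec i j r"]) auto
  qed
next
  fix H assume "H \<in> hp (real_of_int a) ` consA m"
  then obtain c where c: "c \<in> consA m" "H = hp (real_of_int a) c" by blast
  then consider i where "c = Zc i" | i j r where "i \<noteq> j" "r \<le> m" "c = Ec i j r"
    unfolding consA_def by blast
  then show "H \<in> arrA a m"
  proof cases
    case 1 then show ?thesis using c unfolding arrA_def hp_def nv_def by auto
  next
    case 2
    show ?thesis
    proof (cases "r = 0")
      case True then show ?thesis using c 2 unfolding arrA_def hp_def nv_def by auto
    next
      case False then show ?thesis using c 2 unfolding arrA_def hp_def nv_def
        by (intro UnI2 CollectI exI[of _ i] exI[of _ j] exI[of _ r]) auto
    qed
  qed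
qed

lemma nv_nz: assumes "c \<in> consA m" shows "nv b c \<noteq> 0"
proof -
  from assms consider i where "c = Zc i" | i j r where "i \<noteq> j" "c = Ec i j r"
    unfolding consA_def by blast
  then show ?thesis
  proof cases
    case 1
    then have "nv b c $ i = 1" by (simp add: nv_def axis_def)
    then show ?thesis by auto
  next
    case 2
    then have "nv b c $ i = 1" by (simp add: nv_def axis_def)
    then show ?thesis by auto
  qed
qed

lemma pow_facts: assumes "(b::real) > 1"
  shows "b^r \<noteq> 0" "b^r = b^r' \<longleftrightarrow> r = r'" "b^r * b^r' = 1 \<longleftrightarrow> r = 0 \<and> r' = 0"
proof -
  show "b^r \<noteq> 0" using assms by simp
  show "b^r = b^r' \<longleftrightarrow> r = r'" using assms by simp
  have "b^r * b^r' = b^(r + r')" by (simp add: power_add)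
  moreover have "b^(r+r') = 1 \<longleftrightarrow> r + r' = 0" using assms by (metis power_0 power_inject_exp)
  ultimately show "b^r * b^r' = 1 \<longleftrightarrow> r = 0 \<and> r' = 0" by simp
qed

lemma hp_inj: fixes c c' :: "('n::finite) cons" assumes b: "b > 1" and "c \<in> consA m" "c' \<in> consA m" "hp b c = hp b c'"
  shows "c = c' \<or> (\<exists>i j. c = Ec i j 0 \<and> c' = Ec j i 0)"
proof -
  have S: "satR b c x = satR b c' x" for x using assms(4) hp_sat by blast
  define e where "e = (\<lambda>k. axis k (1::real) :: real^'n)"
  define v where "v = (\<lambda>i j r. (\<chi> k. if k = i then b^r else if k = j then 1 else 0) :: real^'n)"
  have ev: "e k $ l = (if l = k then 1 else 0)" for k l by (simp add: e_def axis_def)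
  have vv: "i \<noteq> j \<Longrightarrow> v i j r $ l = (if l = i then b^r else if l = j then 1 else 0)" for i j r l
    by (simp add: v_def)
  note P = pow_facts[OF b]
  from assms(2) consider i where "c = Zc i" | i j r where "i \<noteq> j" "c = Ec i j r"
    unfolding consA_def by blast
  then show ?thesis
  proof cases
    case 1
    from assms(3) consider i' where "c' = Zc i'" | i' j' r' where "i' \<noteq> j'" "c' = Ec i' j' r'"
      unfolding consA_def by blast
    then show ?thesis
    proof cases
      case c1: 1
      have "satR b c (e i) = satR b c' (e i)" by (rule S)
      then show ?thesis using 1 c1 by (auto simp: satR_def ev split: if_splits)
    next
      case c2: 2
      have s1: "satR b c (v i' j' r') = satR b c' (v i' j' r')" by (rule S)
      have s2: "satR b c (e i) = satR b c' (e i)" by (rule S)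
      show ?thesis using s1 s2 1 c2 P by (auto simp: satR_def ev vv split: if_splits)
    qed
  next
    case 2
    from assms(3) consider i' where "c' = Zc i'" | i' j' r' where "i' \<noteq> j'" "c' = Ec i' j' r'"
      unfolding consA_def by blast
    then show ?thesis
    proof cases
      case c1: 1
      have s1: "satR b c (v i j r) = satR b c' (v i j r)" by (rule S)
      have s2: "satR b c (e i') = satR b c' (e i')" by (rule S)
      show ?thesis using s1 s2 2 c1 P by (auto simp: satR_def ev vv split: if_splits)
    next
      case c2: 2
      have s1: "satR b c (v i j r) = satR b c' (v i j r)" by (rule S)
      have s2: "satR b c (e i) = satR b c' (e i)" by (rule S)
      have s3: "satR b c (e j) = satR b c' (e j)" by (rule S)
      have ij: "(i' = i \<and> j' = j) \<or> (i' = j \<and> j' = i)"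
        using s2 s3 2 c2 P by (auto simp: satR_def ev split: if_splits)
      then show ?thesis
      proof
        assume "i' = i \<and> j' = j"
        then show ?thesis using s1 2 c2 P by (auto simp: satR_def vv)
      next
        assume "i' = j \<and> j' = i"
        then have "b^r' * b^r = 1" using s1 2 c2 by (auto simp: satR_def vv)
        then show ?thesis using \<open>i' = j \<and> j' = i\<close> 2 c2 P by auto
      qed
    qed
  qed
qed

lemma satM_unique: fixes c c' :: "('n::finite) cons" assumes "b > 1" "c \<in> consA m" "c' \<in> consA m" "hp b c = hp b c'" "y \<in> PM N"
  shows "satM N c y = satM N c' y"
proof -
  from hp_inj[OF assms(1-4)] show ?thesis
  proof
    assume "\<exists>i j. c = Ec i j 0 \<and> c' = Ec j i 0"
    then obtain i j where ij: "c = Ec i j 0" "c' = Ec j i 0" by blast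
    have "y i \<in> vals N" "y j \<in> vals N" using assms(5) by (auto simp: PM_def)
    then show ?thesis using ij by (auto simp: satM_def vals_def)
  qed simp
qed



definition MH :: "real \<Rightarrow> nat \<Rightarrow> nat \<Rightarrow> (real^'n) set \<Rightarrow> ('n \<Rightarrow> int option) set" where
  "MH b m N H = {y \<in> PM N. \<forall>c\<in>consA m. hp b c = H \<longrightarrow> satM N c y}"

lemma finite_PM: "finite (PM N :: ('n::finite \<Rightarrow> int option) set)"
proof -
  have "(PM N :: ('n \<Rightarrow> int option) set) = PiE (UNIV::'n set) (\<lambda>_. vals N)" by (auto simp: PM_def PiE_UNIV_domain Pi_def)
  moreover have "finite (PiE (UNIV::'n set) (\<lambda>_. vals N))" by (rule finite_PiE) (auto simp: vals_def)
  ultimately show ?thesis by simp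
qed

lemma incl_excl:
  fixes X :: "'a \<Rightarrow> 'b set" assumes "finite A" "finite P" "\<forall>H\<in>A. X H \<subseteq> P"
  shows "int (card (P - \<Union> (X ` A))) = (\<Sum>B\<in>Pow A. (-1)^card B * int (card (P \<inter> \<Inter> (X ` B))))"
proof -
  interpret Incl_Excl finite "int o card" proof qed (auto simp add: card_Un_disjnt)
  have fX: "\<And>H. H \<in> A \<Longrightarrow> finite (X H)" using assms finite_subset by blast
  have U: "int (card (\<Union> (X ` A))) = (\<Sum>B | B \<subseteq> A \<and> B \<noteq> {}. (- 1) ^ (card B + 1) * int (card (\<Inter> (X ` B))))"
    using restricted_indexed[of A X] assms(1) fX by simp
  have sub: "\<Union> (X ` A) \<subseteq> P" using assms(3) by blast
  have "card (P - \<Union> (X ` A)) = card P - card (\<Union> (X ` A))"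
    by (rule card_Diff_subset) (use sub assms(2) finite_subset in auto)
  moreover have "card (\<Union> (X ` A)) \<le> card P" using sub assms(2) by (rule card_mono[rotated])
  ultimately have "int (card (P - \<Union> (X ` A))) = int (card P) - int (card (\<Union> (X ` A)))" by simp
  also have "\<dots> = (\<Sum>B\<in>Pow A. (-1)^card B * int (card (P \<inter> \<Inter> (X ` B))))"
  proof -
    have PA: "Pow A = insert {} {B. B \<subseteq> A \<and> B \<noteq> {}}" by auto
    have fin: "finite {B. B \<subseteq> A \<and> B \<noteq> {}}" using assms(1) by simp
    have "(\<Sum>B | B \<subseteq> A \<and> B \<noteq> {}. (-1)^card B * int (card (P \<inter> \<Inter> (X ` B))))
        = - (\<Sum>B | B \<subseteq> A \<and> B \<noteq> {}. (- 1) ^ (card B + 1) * int (card (\<Inter> (X ` B))))"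
    proof -
      have "P \<inter> \<Inter> (X ` B) = \<Inter> (X ` B)" if "B \<subseteq> A" "B \<noteq> {}" for B using that assms(3) by blast
      then have "(\<Sum>B | B \<subseteq> A \<and> B \<noteq> {}. (-1)^card B * int (card (P \<inter> \<Inter> (X ` B))))
          = (\<Sum>B | B \<subseteq> A \<and> B \<noteq> {}. (-1)^card B * int (card (\<Inter> (X ` B))))"
        by (intro sum.cong) auto
      then show ?thesis by (simp add: sum_negf[symmetric])
    qed
    then show ?thesis unfolding PA using fin U by (simp add: sum.insert)
  qed
  finally show ?thesis .
qed

lemma modeq0: "0 \<le> p \<Longrightarrow> p < int N \<Longrightarrow> (p - q - r) mod int N = 0 \<longleftrightarrow> p = (q + r) mod int N"
proof -
  assume p: "0 \<le> p" "p < int N"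
  have "p = (q + r) mod int N \<longleftrightarrow> p mod int N = (q + r) mod int N" using p by simp
  also have "\<dots> \<longleftrightarrow> int N dvd p - (q + r)" by (rule mod_eq_dvd_iff)
  also have "\<dots> \<longleftrightarrow> (p - q - r) mod int N = 0" by (simp add: mod_eq_0_iff_dvd diff_diff_eq)
  finally show ?thesis by simp
qed

lemma card_good: assumes "N > 0"
  shows "card {y \<in> (PM N :: ('n \<Rightarrow> int option) set). \<forall>c\<in>consA m. \<not> satM N c y} = card (QS N m (UNIV::'n set))"
proof -
  let ?G = "{y \<in> PM N. \<forall>c\<in>consA m. \<not> satM N c y} :: ('n \<Rightarrow> int option) set"
  have "bij_betw (\<lambda>y i. the (y i)) ?G (QS N m UNIV)"
  proof (rule bij_betw_byWitness[where f' = "\<lambda>z i. Some (z i)"])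
    have nn: "y i \<noteq> None" if "y \<in> ?G" for y i
    proof -
      have "Zc i \<in> consA m" by (simp add: consA_def)
      then have "\<not> satM N (Zc i) y" using that by blast
      then show ?thesis by (simp add: satM_def)
    qed
    show "\<forall>y\<in>?G. (\<lambda>i. Some (the (y (i::'n)))) = y" using nn by auto
    show "\<forall>z\<in>QS N m UNIV. (\<lambda>i. the (Some (z (i::'n)))) = z" by auto
    show "(\<lambda>y i. the (y i)) ` ?G \<subseteq> QS N m UNIV"
    proof (rule image_subsetI)
      fix y :: "'n \<Rightarrow> int option" assume yG: "y \<in> ?G"
      then have y: "y \<in> PM N" "\<forall>c\<in>consA m. \<not> satM N c y" by auto
      obtain p where p: "\<And>i. y i = Some (p i)" "\<And>i. 0 \<le> p i \<and> p i < int N"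
      proof -
        have "\<exists>u. y i = Some u \<and> 0 \<le> u \<and> u < int N" for i
        proof -
          have "y i \<in> vals N" using y(1) by (simp add: PM_def)
          then show ?thesis using nn[OF yG, of i] by (auto simp: vals_def)
        qed
        then show ?thesis using that by metis
      qed
      have "cnd N m (p i) (p j)" if "i \<noteq> j" for i j
        unfolding cnd_def
      proof
        fix r assume r: "r \<in> {0..int m}"
        then obtain r' where r': "r = int r'" "r' \<le> m" by (metis atLeastAtMost_iff nonneg_int_cases of_nat_le_iff)
        have "Ec i j r' \<in> consA m" "Ec j i r' \<in> consA m" using that r' by (auto simp: consA_def)
        then have "\<not> satM N (Ec i j r') y" "\<not> satM N (Ec j i r') y" using y by auto
        then have "p i \<noteq> (p j + r) mod int N" "p j \<noteq> (p i + r) mod int N"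
          using p r' by (auto simp: satM_def)
        then show "(p i - p j - r) mod int N \<noteq> 0 \<and> (p j - p i - r) mod int N \<noteq> 0"
          using modeq0 p(2) by metis
      qed
      moreover have "(\<lambda>i. the (y i)) = p" using p by auto
      ultimately show "(\<lambda>i. the (y i)) \<in> QS N m UNIV" using p(2) by (auto simp: QS_def)
    qed
    show "(\<lambda>z i. Some (z i)) ` QS N m UNIV \<subseteq> ?G"
    proof (rule image_subsetI)
      fix z assume z: "z \<in> QS N m (UNIV::'n set)"
      have zr: "0 \<le> z i \<and> z i < int N" for i using z by (auto simp: QS_def)
      have "(\<lambda>i. Some (z i)) \<in> PM N" using zr by (auto simp: PM_def vals_def)
      moreover have "\<not> satM N c (\<lambda>i. Some (z i))" if c: "c \<in> consA m" for c
      proof -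
        from c consider i where "c = Zc i" | i j r where "i \<noteq> j" "r \<le> m" "c = Ec i j r"
          unfolding consA_def by blast
        then show ?thesis
        proof cases
          case 1 then show ?thesis by (simp add: satM_def)
        next
          case 2
          have "cnd N m (z i) (z j)" using QS_cnd[OF z] 2 by blast
          moreover have "int r \<in> {0..int m}" using 2 by simp
          ultimately have "(z i - z j - int r) mod int N \<noteq> 0" unfolding cnd_def by auto
          then have "z i \<noteq> (z j + int r) mod int N" using modeq0 zr by metis
          then show ?thesis using 2 by (simp add: satM_def)
        qed
      qed
      ultimately show "(\<lambda>i. Some (z i)) \<in> ?G" by blast
    qed
  qed
  then show ?thesis by (rule bij_betw_same_card)
qed

lemma main_value:
  fixes a :: int
  assumes "a \<ge> 2" "2*m + 1 < N" "\<forall>C \<subseteq> consA m. cycok N (C :: 'n cons set)"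
  shows "poly (char_poly (arrA a m :: (real^'n) set set)) (real N + 1) = real (card (QS N m (UNIV :: 'n set)))"
proof -
  define b where "b = real_of_int a"
  have b1: "b > 1" using assms by (simp add: b_def)
  have N0: "N > 0" using assms by simp
  let ?A = "arrA a m :: (real^'n) set set"
  have A: "?A = hp b ` consA m" by (simp add: arrA_eq b_def)
  have finA: "finite ?A" unfolding A by (rule finite_imageI[OF finite_consA])
  have ne: "{B. B \<subseteq> ?A \<and> \<Inter>B \<noteq> {}} = Pow ?A"
  proof -
    have "0 \<in> \<Inter>B" if "B \<subseteq> ?A" for B using that A by (auto simp: hp_def hyperplane_def)
    then show ?thesis by blast
  qed
  have "poly (char_poly ?A) (real N + 1) = (\<Sum>B\<in>Pow ?A. (-1)^card B * (real N + 1)^(CARD('n) - arr_rank B))"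
    unfolding char_poly_def ne by (simp add: poly_sum poly_monom)
  also have "\<dots> = (\<Sum>B\<in>Pow ?A. (-1)^card B * real (card (PM N \<inter> \<Inter> (MH b m N ` B))))"
  proof (rule sum.cong[OF refl])
    fix B assume B: "B \<in> Pow ?A"
    define C where "C = {c \<in> consA m. hp b c \<in> B}"
    have BC: "B = hp b ` C" using B A by (auto simp: C_def)
    have Cs: "C \<subseteq> consA m" by (auto simp: C_def)
    have rk: "arr_rank B = CARD('n) - card (Reps C)" unfolding BC
      by (rule rank_hp[OF b1]) (use nv_nz Cs in auto)
    have le: "card (Reps C) \<le> CARD('n)" by (rule card_mono) auto
    have VMeq: "PM N \<inter> \<Inter> (MH b m N ` B) = VM N C"
    proof (cases "B = {}")
      case True then show ?thesis by (auto simp: C_def VM_def)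
    next
      case False then show ?thesis using B A by (auto simp: MH_def VM_def C_def)
    qed
    have "card (VM N C) = Suc N ^ card (Reps C)" using card_VM[OF N0] assms(3) Cs by auto
    then show "(-1)^card B * (real N + 1)^(CARD('n) - arr_rank B) = (-1)^card B * real (card (PM N \<inter> \<Inter> (MH b m N ` B)))"
      using rk le VMeq by (simp add: add.commute)
  qed
  also have "\<dots> = real_of_int (\<Sum>B\<in>Pow ?A. (-1)^card B * int (card (PM N \<inter> \<Inter> (MH b m N ` B))))"
    by simp
  also have "\<dots> = real_of_int (int (card (PM N - \<Union> (MH b m N ` ?A))))"
    by (subst incl_excl) (use finA finite_PM in \<open>auto simp: MH_def\<close>)
  also have "PM N - \<Union> (MH b m N ` ?A) = {y \<in> PM N. \<forall>c\<in>consA m. \<not> satM N c y}"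
  proof -
    have "y \<notin> MH b m N (hp b c) \<longleftrightarrow> \<not> satM N c y" if "y \<in> PM N" "c \<in> consA m" for y c
      using satM_unique[OF b1 _ that(2) _ that(1)] that unfolding MH_def by blast
    then show ?thesis unfolding A by blast
  qed
  also have "real_of_int (int (card \<dots>)) = real (card (QS N m (UNIV :: 'n set)))"
    using card_good[OF N0] by simp
  finally show ?thesis .
qed



lemma ff_real: assumes "k \<le> X" shows "real (ff X k) = (\<Prod>i<k. real X - real i)"
  unfolding ff_def using assms by (simp add: of_nat_diff)

theorem proposition4p2:
  fixes a :: int and m :: nat
  assumes "a \<ge> 2" and "m \<ge> 1"
  shows "char_poly (arrA a m :: (real^'n) set set) =
    [:-1, 1:] * (\<Prod>j\<in>{1..CARD('n) - 1}.
        [: - (1 + of_nat m * of_nat CARD('n) + of_nat j), 1 :])"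
proof -
  let ?n = "CARD('n)"
  let ?P = "char_poly (arrA a m :: (real^'n) set set)"
  define R where "R = ([:-1, 1:] * (\<Prod>j\<in>{1..?n - 1}. [: - (1 + of_nat m * of_nat ?n + of_nat j), 1 :]) :: real poly)"
  define K where "K = Max ((\<lambda>(C, i). nat \<bar>SOME k. k \<noteq> 0 \<and> reach C i i k\<bar>) ` (Pow (consA m) \<times> (UNIV :: 'n set)))"
  have cyc: "\<forall>C \<subseteq> consA m. cycok N (C :: 'n cons set)" if "N > K" for N
  proof (intro allI impI)
    fix C :: "'n cons set" assume C: "C \<subseteq> consA m"
    show "cycok N C" unfolding cycok_def
    proof (intro allI impI)
      fix i assume ex: "\<exists>k. k \<noteq> 0 \<and> reach C i i k"
      let ?k = "SOME k. k \<noteq> 0 \<and> reach C i i k"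
      have k: "?k \<noteq> 0 \<and> reach C i i ?k" using someI_ex[OF ex] .
      have finP: "finite (Pow (consA m :: 'n cons set) \<times> (UNIV :: 'n set))"
        using finite_consA[where 'n='n, of m] by simp
      have "(C, i) \<in> Pow (consA m) \<times> (UNIV :: 'n set)" using C by simp
      then have "nat \<bar>?k\<bar> \<in> (\<lambda>(C, i). nat \<bar>SOME k. k \<noteq> 0 \<and> reach C i i k\<bar>) ` (Pow (consA m) \<times> (UNIV :: 'n set))"
        by (rule rev_image_eqI) simp
      then have "nat \<bar>?k\<bar> \<le> K" unfolding K_def
        by (rule Max_ge[OF finite_imageI[OF finP]])
      then show "\<exists>k. k \<noteq> 0 \<and> reach C i i k \<and> \<bar>k\<bar> < int N" using k that by (intro exI[of _ ?k]) auto
    qed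
  qed
  define N0 where "N0 = K + (?n + 2) * (m + 1) + 1"
  have eq: "poly ?P (real N + 1) = poly R (real N + 1)" if "N \<ge> N0" for N
  proof -
    have N1: "2*m + 1 < N" "N > K" using that by (auto simp: N0_def algebra_simps)
    have N2: "?n * m + ?n \<le> N" using that by (auto simp: N0_def algebra_simps)
    have "poly ?P (real N + 1) = real (card (QS N m (UNIV :: 'n set)))"
      by (rule main_value[OF assms(1) N1(1) cyc[OF N1(2)]])
    also have "card (QS N m (UNIV :: 'n set)) = N * card (LS m (UNIV - {undefined::'n}) (N - 2*m - 1))"
      by (rule card_QS) (use N1 in auto)
    also have "card (LS m (UNIV - {undefined::'n}) (N - 2*m - 1)) = FF m (?n - 1) (N - 2*m - 1)"
      by (simp add: card_LS)
    also have "real (N * FF m (?n - 1) (N - 2*m - 1)) = poly R (real N + 1)"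
    proof (cases "?n = 1")
      case True then show ?thesis by (simp add: R_def FF_def)
    next
      case False
      have "?n > 0" by (rule finite_UNIV_card_ge_0) simp
      then have n2: "?n \<ge> 2" using False by linarith
      have X: "N - 2*m - 1 - (?n - 1 - 1) * m = N - ?n * m - 1"
      proof -
        obtain k where nk: "?n = k + 2" using n2 by (metis add.commute le_add_diff_inverse)
        have "2*m + 1 + (?n - 1 - 1) * m = ?n * m + 1"
          unfolding nk by (simp add: algebra_simps)
        then show ?thesis by (simp add: diff_diff_left)
      qed
      have le: "?n - 1 \<le> N - ?n * m - 1" using N2 n2 by simp
      have "real (FF m (?n - 1) (N - 2*m - 1)) = (\<Prod>i<?n - 1. real (N - ?n * m - 1) - real i)"
        unfolding FF_def X by (rule ff_real[OF le])
      also have "\<dots> = (\<Prod>j\<in>{1..?n - 1}. (real N + 1) - (1 + real m * real ?n + real j))"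
      proof -
        define Y where "Y = N - ?n * m - 1"
        have e: "real Y = real N - real ?n * real m - 1" using N2 n2 unfolding Y_def
          by (simp add: of_nat_diff)
        have s: "(\<Prod>j\<in>{1..?n - 1}. g j) = (\<Prod>i<?n - 1. g (Suc i))" for g :: "nat \<Rightarrow> real"
          using prod.atLeast1_atMost_eq[of g "?n - 1"] by simp
        have "(\<Prod>i<?n - 1. real Y - real i) = (\<Prod>i<?n - 1. (real N + 1) - (1 + real m * real ?n + real (Suc i)))"
          by (rule prod.cong) (simp_all add: e algebra_simps)
        then show ?thesis unfolding s Y_def .
      qed
      finally show ?thesis by (simp add: R_def poly_prod algebra_simps)
    qed
    finally show ?thesis .
  qed
  have "?P - R = 0"
  proof (rule ccontr)
    assume ne: "?P - R \<noteq> 0"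
    then have fin: "finite {x. poly (?P - R) x = 0}" by (rule poly_roots_finite)
    have "(\<lambda>N. real N + 1) ` {N0..} \<subseteq> {x. poly (?P - R) x = 0}" using eq by auto
    then have "finite ((\<lambda>N. real N + 1) ` {N0..})" using fin finite_subset by blast
    moreover have "inj_on (\<lambda>N. real N + 1) {N0..}" by (rule inj_onI) simp
    ultimately have "finite {N0..}" using finite_imageD by blast
    then show False using infinite_Ici by blast
  qed
  then show ?thesis unfolding R_def by simp
qed


end
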